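(* Let $2\le n<m$ and $Q=\sum_{i\in[m]}q_i\mathrm B(\sigma_i)\in\mathbb B_m^*$ with all $q_i>0$ and $0\le\sigma_1<\cdots<\sigma_m\le1/2$. Let $W=D_Q(i_2,\dots,i_n;s_2,\dots,s_n)$ and $W'=D_Q(i'_2,\dots,i'_n;s'_2,\dots,s'_n)$ be $2n$-P$^*$-degradations of $Q$ such that the number of indices $j\in\{2,\dots,n\}$ with $(i_j,s_j)\neq(i'_j,s'_j)$ is at most two. If $W\preccurlyeq W'$, then $W\cong W'$. (That is, no $2n$-P$^*$-degradation strictly upgrading $W$ can be obtained by changing at most two splitting patterns of $W$.)
   Context: A BIDMC $W$ has input uniform on $\{0,1\}$, discrete output alphabet $\mathcal Y$ and transition probabilities $\Pr(y\mid x)$; its LR-profile is $P_W(\varepsilon)=\Pr\big(\mathcal L_W(y)=\varepsilon/(1-\varepsilon)\big)$ with $\mathcal L_W(\hat y)=\Pr(y=\hat y\mid x=0)/\Pr(y=\hat y\mid x=1)$, and $W\cong W'$ if LR-profiles coincide; channel identities are up to $\cong$. $W'\preccurlyeq W$ if there is a channel $T$ from the output alphabet of $W$ to that of $W'$ with $\Pr(y'\mid x'=a)=\sum_{y}\Pr(y\mid x=a)T(y'\mid y)$. $\mathrm B(\varepsilon)$ is the BSC with crossover probability $\varepsilon$; $\sum_iq_iW_i$ denotes the random switching channel (use $W_i$ with probability $q_i$ independently of the input and output the index $i$ along with the output). $\mathbb B_n$ is the set of BIDMCs equivalent to $\sum_{i\in[n]}p_i\mathrm B(\varepsilon_i)$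 for a probability vector $(p_i)$ and $\varepsilon_i\in[0,1]$; $\mathbb B_n^*=\mathbb B_n\setminus\mathbb B_{n-1}$. $P_\epsilon(W)=\frac12\sum_{y}\min\{\Pr(y\mid x=0),\Pr(y\mid x=1)\}$. For a symmetric BIDMC $Q$ and $n\ge1$, $W$ is a $2n$-P-degradation of $Q$ if $W\in\mathbb B_n$, $W\preccurlyeq Q$ and $P_\epsilon(W)=\min\{P_\epsilon(W'):W'\in\mathbb B_n,\ W'\preccurlyeq Q\}$. Construction of $D_Q$: for $Q$ as in the claim, put $q_0=q_{m+1}=0$. Given integers $1\le i_2<\cdots<i_n\le m$ and reals $s_j\in[0,q_{i_j}]$, set $i_1=0$, $s_1=0$, $i_{n+1}=m+1$, $s_{n+1}=0$, and for $j\in[n]$ $$p_j=s_j+(q_{i_{j+1}}-s_{j+1})+\sum_{i_j<i<i_{j+1}}q_i,\qquad p_j\varepsilon_j=s_j\sigma_{i_j}+(q_{i_{j+1}}-s_{j+1})\sigma_{i_{j+1}}+\sum_{i_j<i<i_{j+1}}q_i\sigma_i$$ (terms with weight $0$ contribute $0$). Then $D_Q(i_2,\dots,i_n;s_2,\dots,s_n)=\sum_{j\in[n]:p_j>0}p_j\mathrm B(\varepsilon_j)$; the pairs $(i_j,s_j)$ are its splitting patterns. Such a channel is a $2n$-P$^*$-degradation of $Q$ if (i) all $p_j>0$ and $0\le\varepsilon_1<\cdots<\varepsilon_n\le1/2$; (ii) it is a $2n$-P-degradation of $Q$; (iii) for every $j\in[n]$ with $i_{j+1}=i_j+1$: if $s_j=0$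 then $s_{j+1}=0$, and if $s_{j+1}=q_{i_{j+1}}$ then $s_j=q_{i_j}$. *)

theory Defs
  imports Complex_Main
begin

text \<open>A BIDMC with finite output alphabet is represented as a pair (Y, W):
  Y is a finite set of output symbols (encoded as naturals) and
  W x y = Pr(y | x) for inputs x in {0,1}.\<close>

type_synonym chan = "nat set \<times> (nat \<Rightarrow> nat \<Rightarrow> real)"

definition is_bidmc :: "chan \<Rightarrow> bool" where
  "is_bidmc C \<longleftrightarrow> finite (fst C) \<and>
     (\<forall>x\<in>{0,1}. \<forall>y\<in>fst C. snd C x y \<ge> 0) \<and>
     (\<forall>x\<in>{0,1}. (\<Sum>y\<in>fst C. snd C x y) = 1)"

text \<open>LR-profile: P_W(eps) = Pr(L_W(y) = eps/(1-eps)) under uniform input,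
  where L_W(y) = W 0 y / W 1 y in [0, infinity]. The event
  L_W(y) = eps/(1-eps) is written cross-multiplied (handles eps = 1 / infinity).\<close>

definition lr_profile :: "chan \<Rightarrow> real \<Rightarrow> real" where
  "lr_profile C \<epsilon> =
     (\<Sum>y\<in>{y\<in>fst C. snd C 0 y * (1 - \<epsilon>) = snd C 1 y * \<epsilon>}.
        (snd C 0 y + snd C 1 y) / 2)"

definition chan_equiv :: "chan \<Rightarrow> chan \<Rightarrow> bool" where
  "chan_equiv C C' \<longleftrightarrow> (\<forall>\<epsilon>\<in>{0..1}. lr_profile C \<epsilon> = lr_profile C' \<epsilon>)"

text \<open>degraded C' C  means  C' \<preccurlyeq> C : C' is obtained from C by post-processing
  with a channel T, where T y y' = T(y' | y).\<close>

definition degraded :: "chan \<Rightarrow> chan \<Rightarrow> bool" where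
  "degraded C' C \<longleftrightarrow> (\<exists>T :: nat \<Rightarrow> nat \<Rightarrow> real.
     (\<forall>y\<in>fst C. \<forall>y'\<in>fst C'. T y y' \<ge> 0) \<and>
     (\<forall>y\<in>fst C. (\<Sum>y'\<in>fst C'. T y y') = 1) \<and>
     (\<forall>a\<in>{0,1}. \<forall>y'\<in>fst C'. snd C' a y' = (\<Sum>y\<in>fst C. snd C a y * T y y')))"

text \<open>Random switching channel  sum_{j in J} p_j B(e_j): output (j, b) encoded as 2*j + b.\<close>

definition bsc_mix :: "nat set \<Rightarrow> (nat \<Rightarrow> real) \<Rightarrow> (nat \<Rightarrow> real) \<Rightarrow> chan" where
  "bsc_mix J p e = ({y. y div 2 \<in> J},
     \<lambda>x y. p (y div 2) * (if y mod 2 = x then 1 - e (y div 2) else e (y div 2)))"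

definition in_B :: "nat \<Rightarrow> chan \<Rightarrow> bool" where
  "in_B n C \<longleftrightarrow> is_bidmc C \<and>
     (\<exists>p e. (\<forall>i\<in>{1..n}. p i \<ge> 0 \<and> 0 \<le> e i \<and> e i \<le> 1) \<and> (\<Sum>i=1..n. p i) = 1 \<and>
            chan_equiv C (bsc_mix {1..n} p e))"

definition in_Bstar :: "nat \<Rightarrow> chan \<Rightarrow> bool" where
  "in_Bstar n C \<longleftrightarrow> in_B n C \<and> \<not> in_B (n - 1) C"

definition Perr :: "chan \<Rightarrow> real" where
  "Perr C = (1/2) * (\<Sum>y\<in>fst C. min (snd C 0 y) (snd C 1 y))"

definition is_P_degr :: "nat \<Rightarrow> chan \<Rightarrow> chan \<Rightarrow> bool" where
  "is_P_degr n W Q \<longleftrightarrow> in_B n W \<and> degraded W Q \<and>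
     (\<forall>W'. in_B n W' \<and> degraded W' Q \<longrightarrow> Perr W \<le> Perr W')"

text \<open>Construction D_Q. Parameters: m, q, sigma (Q = sum_{k in [m]} q_k B(sigma_k)),
  n, and i, s (only i j, s j for j in {2..n} are used).\<close>

definition qx :: "nat \<Rightarrow> (nat \<Rightarrow> real) \<Rightarrow> nat \<Rightarrow> real" where
  "qx m q k = (if 1 \<le> k \<and> k \<le> m then q k else 0)"

definition ix :: "nat \<Rightarrow> nat \<Rightarrow> (nat \<Rightarrow> nat) \<Rightarrow> nat \<Rightarrow> nat" where
  "ix m n i j = (if j = 1 then 0 else if j = n + 1 then m + 1 else i j)"

definition sx :: "nat \<Rightarrow> (nat \<Rightarrow> real) \<Rightarrow> nat \<Rightarrow> real" where
  "sx n s j = (if j = 1 \<or> j = n + 1 then 0 else s j)"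

definition DQ_p :: "nat \<Rightarrow> (nat \<Rightarrow> real) \<Rightarrow> nat \<Rightarrow> (nat \<Rightarrow> nat) \<Rightarrow> (nat \<Rightarrow> real) \<Rightarrow> nat \<Rightarrow> real" where
  "DQ_p m q n i s j =
     sx n s j + (qx m q (ix m n i (j+1)) - sx n s (j+1))
     + (\<Sum>k\<in>{ix m n i j<..<ix m n i (j+1)}. qx m q k)"

definition DQ_pe :: "nat \<Rightarrow> (nat \<Rightarrow> real) \<Rightarrow> (nat \<Rightarrow> real) \<Rightarrow> nat \<Rightarrow> (nat \<Rightarrow> nat) \<Rightarrow> (nat \<Rightarrow> real) \<Rightarrow> nat \<Rightarrow> real" where
  "DQ_pe m q \<sigma> n i s j =
     sx n s j * \<sigma> (ix m n i j)
     + (qx m q (ix m n i (j+1)) - sx n s (j+1)) * \<sigma> (ix m n i (j+1))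
     + (\<Sum>k\<in>{ix m n i j<..<ix m n i (j+1)}. qx m q k * \<sigma> k)"

definition DQ_eps :: "nat \<Rightarrow> (nat \<Rightarrow> real) \<Rightarrow> (nat \<Rightarrow> real) \<Rightarrow> nat \<Rightarrow> (nat \<Rightarrow> nat) \<Rightarrow> (nat \<Rightarrow> real) \<Rightarrow> nat \<Rightarrow> real" where
  "DQ_eps m q \<sigma> n i s j = DQ_pe m q \<sigma> n i s j / DQ_p m q n i s j"

definition DQ :: "nat \<Rightarrow> (nat \<Rightarrow> real) \<Rightarrow> (nat \<Rightarrow> real) \<Rightarrow> nat \<Rightarrow> (nat \<Rightarrow> nat) \<Rightarrow> (nat \<Rightarrow> real) \<Rightarrow> chan" where
  "DQ m q \<sigma> n i s =
     bsc_mix {j\<in>{1..n}. DQ_p m q n i s j > 0} (DQ_p m q n i s) (DQ_eps m q \<sigma> n i s)"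

definition DQ_valid :: "nat \<Rightarrow> (nat \<Rightarrow> real) \<Rightarrow> nat \<Rightarrow> (nat \<Rightarrow> nat) \<Rightarrow> (nat \<Rightarrow> real) \<Rightarrow> bool" where
  "DQ_valid m q n i s \<longleftrightarrow>
     (\<forall>j\<in>{2..n}. 1 \<le> i j \<and> i j \<le> m \<and> 0 \<le> s j \<and> s j \<le> q (i j)) \<and>
     (\<forall>j\<in>{2..<n}. i j < i (j+1))"

definition is_Pstar_degr :: "nat \<Rightarrow> (nat \<Rightarrow> real) \<Rightarrow> (nat \<Rightarrow> real) \<Rightarrow> nat \<Rightarrow> (nat \<Rightarrow> nat) \<Rightarrow> (nat \<Rightarrow> real) \<Rightarrow> bool" where
  "is_Pstar_degr m q \<sigma> n i s \<longleftrightarrow>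
     DQ_valid m q n i s \<and>
     (\<forall>j\<in>{1..n}. DQ_p m q n i s j > 0) \<and>
     0 \<le> DQ_eps m q \<sigma> n i s 1 \<and>
     (\<forall>j\<in>{1..<n}. DQ_eps m q \<sigma> n i s j < DQ_eps m q \<sigma> n i s (j+1)) \<and>
     DQ_eps m q \<sigma> n i s n \<le> 1/2 \<and>
     is_P_degr n (DQ m q \<sigma> n i s) (bsc_mix {1..m} q \<sigma>) \<and>
     (\<forall>j\<in>{1..n}. ix m n i (j+1) = ix m n i j + 1 \<longrightarrow>
        (sx n s j = 0 \<longrightarrow> sx n s (j+1) = 0) \<and>
        (sx n s (j+1) = qx m q (ix m n i (j+1)) \<longrightarrow> sx n s j = qx m q (ix m n i j)))"

end

theory Submission
  imports Defs
begin



lemma sum_atMost_split: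
  fixes f :: "nat \<Rightarrow> real"
  assumes "\<alpha> < \<beta>"
  shows "(\<Sum>b\<le>\<beta>. f b) - (\<Sum>b\<le>\<alpha>. f b) = (\<Sum>b\<in>{\<alpha><..<\<beta>}. f b) + f \<beta>"
  using assms
proof (induction \<beta>)
  case 0 then show ?case by simp
next
  case (Suc \<beta>)
  show ?case
  proof (cases "\<alpha> = \<beta>")
    case True
    have "{\<beta><..<Suc \<beta>} = {}" by auto
    then show ?thesis using True by simp
  next
    case False
    then have "\<alpha> < \<beta>" using Suc by simp
    then have "{\<alpha><..<Suc \<beta>} = insert \<beta> {\<alpha><..<\<beta>}" by auto
    then show ?thesis using Suc.IH[OF \<open>\<alpha> < \<beta>\<close>] by simp
  qed
qed

lemma clamp_sum:
  fixes r :: "nat \<Rightarrow> real"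
  assumes "\<And>b. r b \<ge> 0" "r 0 = 0" "y \<ge> 0"
  shows "(\<Sum>b\<in>{1..M}. max 0 (min (r b) (y - (\<Sum>c\<le>b-1. r c)))) = min y (\<Sum>c\<le>M. r c)"
proof (induction M)
  case 0 then show ?case using assms by simp
next
  case (Suc M)
  have "{1..Suc M} = insert (Suc M) {1..M}" by auto
  then have "(\<Sum>b\<in>{1..Suc M}. max 0 (min (r b) (y - (\<Sum>c\<le>b-1. r c))))
     = max 0 (min (r (Suc M)) (y - (\<Sum>c\<le>M. r c))) + min y (\<Sum>c\<le>M. r c)"
    using Suc by simp
  also have "\<dots> = min y (\<Sum>c\<le>Suc M. r c)"
    using assms(1)[of "Suc M"] by (simp add: min_def max_def)
  finally show ?case .
qed

lemma degr_transfer: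
  assumes "degraded W W'" "finite (fst W)" "finite (fst W')"
    and f01: "\<forall>y\<in>fst W. 0 \<le> f y \<and> f y \<le> 1"
  shows "\<exists>f'. (\<forall>y\<in>fst W'. 0 \<le> f' y \<and> f' y \<le> 1)
     \<and> (\<Sum>y\<in>fst W'. f' y * (snd W' 0 y + snd W' 1 y)) = (\<Sum>y\<in>fst W. f y * (snd W 0 y + snd W 1 y))
     \<and> (\<Sum>y\<in>fst W'. f' y * min (snd W' 0 y) (snd W' 1 y)) \<le> (\<Sum>y\<in>fst W. f y * min (snd W 0 y) (snd W 1 y))"
proof -
  obtain T where T0: "\<forall>y\<in>fst W'. \<forall>y'\<in>fst W. T y y' \<ge> 0"
    and T1: "\<forall>y\<in>fst W'. (\<Sum>y'\<in>fst W. T y y') = 1"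
    and TW: "\<forall>a\<in>{0,1}. \<forall>y'\<in>fst W. snd W a y' = (\<Sum>y\<in>fst W'. snd W' a y * T y y')"
    using assms(1) unfolding degraded_def by blast
  define f' where "f' y = (\<Sum>y'\<in>fst W. T y y' * f y')" for y
  have b1: "0 \<le> f' y \<and> f' y \<le> 1" if "y \<in> fst W'" for y
  proof
    show "0 \<le> f' y" unfolding f'_def using T0 f01 that by (intro sum_nonneg) auto
    have "f' y \<le> (\<Sum>y'\<in>fst W. T y y' * 1)" unfolding f'_def
      using T0 f01 that by (intro sum_mono mult_left_mono) auto
    then show "f' y \<le> 1" using T1 that by simp
  qed
  have e1: "(\<Sum>y\<in>fst W'. f' y * (snd W' 0 y + snd W' 1 y)) = (\<Sum>y\<in>fst W. f y * (snd W 0 y + snd W 1 y))"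
  proof -
    have "(\<Sum>y\<in>fst W'. f' y * (snd W' 0 y + snd W' 1 y))
        = (\<Sum>y\<in>fst W'. \<Sum>y'\<in>fst W. f y' * ((snd W' 0 y + snd W' 1 y) * T y y'))"
      unfolding f'_def sum_distrib_right by (intro sum.cong refl) (simp add: algebra_simps)
    also have "\<dots> = (\<Sum>y'\<in>fst W. \<Sum>y\<in>fst W'. f y' * ((snd W' 0 y + snd W' 1 y) * T y y'))"
      by (rule sum.swap)
    also have "\<dots> = (\<Sum>y'\<in>fst W. f y' * (snd W 0 y' + snd W 1 y'))"
      using TW by (intro sum.cong refl) (simp add: sum_distrib_left[symmetric] sum.distrib algebra_simps)
    finally show ?thesis .
  qed
  have e2: "(\<Sum>y\<in>fst W'. f' y * min (snd W' 0 y) (snd W' 1 y)) \<le> (\<Sum>y\<in>fst W. f y * min (snd W 0 y) (snd W 1 y))"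
  proof -
    have "(\<Sum>y\<in>fst W'. f' y * min (snd W' 0 y) (snd W' 1 y))
        = (\<Sum>y\<in>fst W'. \<Sum>y'\<in>fst W. f y' * (min (snd W' 0 y) (snd W' 1 y) * T y y'))"
      unfolding f'_def sum_distrib_right by (intro sum.cong refl) (simp add: algebra_simps)
    also have "\<dots> = (\<Sum>y'\<in>fst W. \<Sum>y\<in>fst W'. f y' * (min (snd W' 0 y) (snd W' 1 y) * T y y'))"
      by (rule sum.swap)
    also have "\<dots> = (\<Sum>y'\<in>fst W. f y' * (\<Sum>y\<in>fst W'. min (snd W' 0 y) (snd W' 1 y) * T y y'))"
      by (simp add: sum_distrib_left)
    also have "\<dots> \<le> (\<Sum>y'\<in>fst W. f y' * min (snd W 0 y') (snd W 1 y'))"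
    proof (rule sum_mono)
      fix y' assume y': "y' \<in> fst W"
      have "(\<Sum>y\<in>fst W'. min (snd W' 0 y) (snd W' 1 y) * T y y') \<le> min (snd W 0 y') (snd W 1 y')"
      proof -
        have "(\<Sum>y\<in>fst W'. min (snd W' 0 y) (snd W' 1 y) * T y y') \<le> (\<Sum>y\<in>fst W'. snd W' 0 y * T y y')"
          using T0 y' by (intro sum_mono mult_right_mono) auto
        moreover have "(\<Sum>y\<in>fst W'. min (snd W' 0 y) (snd W' 1 y) * T y y') \<le> (\<Sum>y\<in>fst W'. snd W' 1 y * T y y')"
          using T0 y' by (intro sum_mono mult_right_mono) auto
        ultimately show ?thesis using TW y' by simp
      qed
      then show "f y' * (\<Sum>y\<in>fst W'. min (snd W' 0 y) (snd W' 1 y) * T y y') \<le> f y' * min (snd W 0 y') (snd W 1 y')"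
        using f01 y' by (intro mult_left_mono) auto
    qed
    finally show ?thesis .
  qed
  show ?thesis using b1 e1 e2 by blast
qed

lemma bsc_sum:
  fixes J :: "nat set" and h :: "nat \<Rightarrow> 'b::comm_monoid_add"
  assumes "finite J"
  shows "(\<Sum>y\<in>{y. y div 2 \<in> J}. h y) = (\<Sum>j\<in>J. h (2*j) + h (2*j+1))"
proof -
  have S: "{y. y div 2 \<in> J} = (\<lambda>j. 2*j) ` J \<union> (\<lambda>j. 2*j+1) ` J" 
  proof (rule set_eqI, rule iffI)
    fix y assume "y \<in> {y. y div 2 \<in> J}"
    then show "y \<in> (\<lambda>j. 2*j) ` J \<union> (\<lambda>j. 2*j+1) ` J"
      by (cases "even y") (auto elim!: evenE oddE)
  qed auto
  have "(\<Sum>y\<in>{y. y div 2 \<in> J}. h y) = (\<Sum>y\<in>(\<lambda>j. 2*j) ` J. h y) + (\<Sum>y\<in>(\<lambda>j. 2*j+1) ` J. h y)"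
    unfolding S using assms by (intro sum.union_disjoint) (auto, presburger)
  also have "\<dots> = (\<Sum>j\<in>J. h (2*j)) + (\<Sum>j\<in>J. h (2*j+1))"
    by (subst sum.reindex, simp add: inj_on_def, subst sum.reindex, auto simp: inj_on_def)
  finally show ?thesis by (simp add: sum.distrib)
qed

lemma chan_equiv_cong:
  assumes "fst C = fst C'" "\<forall>y\<in>fst C. snd C 0 y = snd C' 0 y \<and> snd C 1 y = snd C' 1 y"
  shows "chan_equiv C C'"
  unfolding chan_equiv_def lr_profile_def
proof
  fix e :: real
  have "{y \<in> fst C. snd C 0 y * (1 - e) = snd C 1 y * e} = {y \<in> fst C'. snd C' 0 y * (1 - e) = snd C' 1 y * e}"
    using assms by auto
  then show "(\<Sum>y\<in>{y \<in> fst C. snd C 0 y * (1 - e) = snd C 1 y * e}. (snd C 0 y + snd C 1 y) / 2) =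
         (\<Sum>y\<in>{y \<in> fst C'. snd C' 0 y * (1 - e) = snd C' 1 y * e}. (snd C' 0 y + snd C' 1 y) / 2)"
    using assms by (intro sum.cong) auto
qed




definition cq :: "nat \<Rightarrow> (nat \<Rightarrow> real) \<Rightarrow> nat \<Rightarrow> real" where
  "cq m q a = (\<Sum>b\<le>a. qx m q b)"
definition clampb :: "nat \<Rightarrow> (nat \<Rightarrow> real) \<Rightarrow> nat \<Rightarrow> real \<Rightarrow> real" where
  "clampb m q b y = max 0 (min (qx m q b) (y - cq m q (b-1)))"
definition GG :: "nat \<Rightarrow> (nat \<Rightarrow> real) \<Rightarrow> (nat \<Rightarrow> real) \<Rightarrow> real \<Rightarrow> real" where
  "GG m q \<sigma> y = (\<Sum>b\<in>{1..m}. \<sigma> b * clampb m q b y)"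
definition KK :: "nat \<Rightarrow> (nat \<Rightarrow> real) \<Rightarrow> nat \<Rightarrow> (nat \<Rightarrow> nat) \<Rightarrow> (nat \<Rightarrow> real) \<Rightarrow> nat \<Rightarrow> real" where
  "KK m q n i s k = cq m q (ix m n i (k+1)) - sx n s (k+1)"

locale QQ =
  fixes m :: nat and q \<sigma> :: "nat \<Rightarrow> real"
  assumes qpos: "\<forall>k\<in>{1..m}. q k > 0"
    and sig: "\<forall>k\<in>{1..<m}. \<sigma> k < \<sigma> (k+1)"
begin

lemma qx_nonneg: "qx m q b \<ge> 0"
  using qpos unfolding qx_def by (auto simp: less_imp_le)

lemma qx_pos: "1 \<le> b \<Longrightarrow> b \<le> m \<Longrightarrow> qx m q b > 0"
  using qpos unfolding qx_def by auto

lemma qx_0[simp]: "qx m q 0 = 0" and qx_m1[simp]: "qx m q (Suc m) = 0"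
  unfolding qx_def by auto

lemma cq_Suc: "cq m q (Suc a) = cq m q a + qx m q (Suc a)"
  unfolding cq_def by simp

lemma cq_0[simp]: "cq m q 0 = 0"
  unfolding cq_def by simp

lemma cq_mono: "a \<le> a' \<Longrightarrow> cq m q a \<le> cq m q a'"
  unfolding cq_def by (intro sum_mono2) (auto simp: qx_nonneg)

lemma cq_strict: "a < a' \<Longrightarrow> a' \<le> m \<Longrightarrow> cq m q a < cq m q a'"
proof -
  assume "a < a'" "a' \<le> m"
  then have "cq m q a \<le> cq m q (a'-1)" by (intro cq_mono) auto
  also have "\<dots> < cq m q (a'-1) + qx m q a'" using qx_pos[of a'] \<open>a < a'\<close> \<open>a' \<le> m\<close> by simp
  also have "\<dots> = cq m q a'" using cq_Suc[of "a'-1"] \<open>a < a'\<close> by simp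
  finally show ?thesis .
qed

lemma cq_le_imp: "cq m q x \<le> cq m q y \<Longrightarrow> x \<le> m \<Longrightarrow> x \<le> y"
  using cq_strict[of y x] by force

lemma cq_less_imp: "cq m q x < cq m q y \<Longrightarrow> x < y"
  using cq_mono[of y x] by force

lemma cq_pred: "1 \<le> a \<Longrightarrow> cq m q a - qx m q a = cq m q (a-1)"
  using cq_Suc[of "a-1"] by simp

lemma cq_Suc_m: "cq m q (Suc m) = cq m q m"
  using cq_Suc[of m] by simp

lemma sig_less: "1 \<le> b \<Longrightarrow> b < a \<Longrightarrow> a \<le> m \<Longrightarrow> \<sigma> b < \<sigma> a"
proof (induction a)
  case 0 then show ?case by simp
next
  case (Suc a)
  have "\<sigma> a < \<sigma> (Suc a)" using sig Suc.prems by auto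
  then show ?case using Suc by (cases "b = a") auto
qed

lemma clamp_hi: "1 \<le> b \<Longrightarrow> cq m q b \<le> y \<Longrightarrow> clampb m q b y = qx m q b"
  unfolding clampb_def using cq_Suc[of "b-1"] qx_nonneg[of b] by (simp add: max_def min_def)

lemma clamp_lo: "y \<le> cq m q (b-1) \<Longrightarrow> clampb m q b y = 0"
  unfolding clampb_def using qx_nonneg[of b] by (simp add: max_def min_def)

lemma clamp_mono: "y \<le> y' \<Longrightarrow> clampb m q b y \<le> clampb m q b y'"
  unfolding clampb_def by (simp add: max_def min_def)

lemma clamp_nonneg: "clampb m q b y \<ge> 0"
  unfolding clampb_def by simp

lemma sum_clamp: "0 \<le> y \<Longrightarrow> (\<Sum>b\<in>{1..M}. clampb m q b y) = min y (cq m q M)"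
  unfolding clampb_def cq_def
  by (rule clamp_sum) (auto simp: qx_nonneg)

lemma sum_clamp_m: "0 \<le> y \<Longrightarrow> y \<le> cq m q m \<Longrightarrow> (\<Sum>b\<in>{1..m}. clampb m q b y) = y"
  using sum_clamp[of y m] by simp

lemma GG_val:
  assumes "a \<le> Suc m" "0 \<le> t" "t \<le> qx m q a"
  shows "GG m q \<sigma> (cq m q a - t) = (\<Sum>b\<le>a. qx m q b * \<sigma> b) - t * \<sigma> a"
proof -
  have pt: "\<sigma> b * clampb m q b (cq m q a - t) =
      (if b \<le> a then qx m q b * \<sigma> b else 0) - (if b = a then t * \<sigma> b else 0)" if "b \<in> {1..m}" for b
  proof -
    consider "b < a" | "b = a" | "a < b" by linarith
    then show ?thesis
    proof cases
      case 1
      have "cq m q b \<le> cq m q (a-1)" using 1 by (intro cq_mono) auto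
      also have "\<dots> = cq m q a - qx m q a" using cq_pred[of a] 1 by simp
      also have "\<dots> \<le> cq m q a - t" using assms by simp
      finally show ?thesis using clamp_hi[of b] that 1 by simp
    next
      case 2
      then show ?thesis unfolding clampb_def using cq_pred[of a] that assms qx_nonneg[of a]
        by (simp add: max_def min_def algebra_simps)
    next
      case 3
      have "cq m q a - t \<le> cq m q (b-1)" using cq_mono[of a "b-1"] 3 assms by force
      then show ?thesis using clamp_lo 3 by simp
    qed
  qed
  have "GG m q \<sigma> (cq m q a - t) = (\<Sum>b\<in>{1..m}. (if b \<le> a then qx m q b * \<sigma> b else 0))
      - (\<Sum>b\<in>{1..m}. (if b = a then t * \<sigma> b else 0))"
    unfolding GG_def sum_subtractf[symmetric] using pt by (intro sum.cong) auto
  also have "(\<Sum>b\<in>{1..m}. (if b = a then t * \<sigma> b else 0)) = t * \<sigma> a"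
  proof (cases "a \<in> {1..m}")
    case True then show ?thesis by simp
  next
    case False
    then have "t = 0" using assms unfolding qx_def by auto
    then show ?thesis by simp
  qed
  also have "(\<Sum>b\<in>{1..m}. (if b \<le> a then qx m q b * \<sigma> b else 0)) = (\<Sum>b\<le>a. qx m q b * \<sigma> b)"
  proof -
    have "(\<Sum>b\<in>{1..m}. (if b \<le> a then qx m q b * \<sigma> b else 0)) = (\<Sum>b\<in>{1..m} \<inter> {..a}. qx m q b * \<sigma> b)"
      by (subst sum.inter_restrict) (auto intro!: sum.cong)
    also have "\<dots> = (\<Sum>b\<le>a. qx m q b * \<sigma> b)"
      by (rule sum.mono_neutral_left) (auto simp: qx_def)
    finally show ?thesis .
  qed
  finally show ?thesis .
qed

end




context QQ
begin

context
  fixes n :: nat and i :: "nat \<Rightarrow> nat" and s :: "nat \<Rightarrow> real"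
  assumes n1: "1 \<le> n" and P: "is_Pstar_degr m q \<sigma> n i s"
begin

lemma valid: "\<forall>j\<in>{2..n}. 1 \<le> i j \<and> i j \<le> m \<and> 0 \<le> s j \<and> s j \<le> q (i j)"
  "\<forall>j\<in>{2..<n}. i j < i (j+1)"
  using P unfolding is_Pstar_degr_def DQ_valid_def by auto

lemma ppos: "j \<in> {1..n} \<Longrightarrow> DQ_p m q n i s j > 0"
  using P unfolding is_Pstar_degr_def by auto

lemma cond3: "j \<in> {1..n} \<Longrightarrow> ix m n i (j+1) = ix m n i j + 1 \<Longrightarrow>
        (sx n s j = 0 \<longrightarrow> sx n s (j+1) = 0) \<and>
        (sx n s (j+1) = qx m q (ix m n i (j+1)) \<longrightarrow> sx n s j = qx m q (ix m n i j))"
  using P unfolding is_Pstar_degr_def by auto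

lemma ix_bounds:
  assumes "k \<le> n"
  shows "ix m n i (k+1) \<le> Suc m \<and> 0 \<le> sx n s (k+1) \<and> sx n s (k+1) \<le> qx m q (ix m n i (k+1))"
proof -
  consider "k = 0" | "k = n" | "1 \<le> k \<and> k < n" using assms by linarith
  then show ?thesis
  proof cases
    case 1 then show ?thesis unfolding ix_def sx_def by simp
  next
    case 2 then show ?thesis unfolding ix_def sx_def using n1 by simp
  next
    case 3
    then have "k+1 \<in> {2..n}" by auto
    note v = valid(1)[rule_format, OF this]
    then show ?thesis using 3 unfolding ix_def sx_def qx_def by auto
  qed
qed

lemma ix_mid:
  assumes "1 \<le> k" "k < n"
  shows "1 \<le> ix m n i (k+1) \<and> ix m n i (k+1) \<le> m"
proof -
  have "k+1 \<in> {2..n}" using assms by auto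
  then show ?thesis using valid(1) assms unfolding ix_def by auto
qed

lemma ix_le_m: "j \<in> {1..n} \<Longrightarrow> ix m n i j \<le> m"
  unfolding ix_def using valid(1) by auto

lemma ix_less: "j \<in> {1..n} \<Longrightarrow> ix m n i j < ix m n i (Suc j)"
proof -
  assume j: "j \<in> {1..n}"
  consider "j = 1" | "j = n" "j \<ge> 2" | "2 \<le> j" "j < n" using j by force
  then show ?thesis
  proof cases
    case 1
    show ?thesis
    proof (cases "n = 1")
      case True then show ?thesis using 1 unfolding ix_def by simp
    next
      case False
      then have "2 \<in> {2..n}" using n1 by auto
      note v = valid(1)[rule_format, OF this]
      then show ?thesis using 1 False unfolding ix_def by (simp add: numeral_2_eq_2)
    qed
  next
    case 2
    then have "n \<in> {2..n}" by auto
    note v = valid(1)[rule_format, OF this]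
    then show ?thesis using 2 unfolding ix_def by auto
  next
    case 3
    then show ?thesis using valid unfolding ix_def by auto
  qed
qed

lemma KK0: "KK m q n i s 0 = 0"
  unfolding KK_def ix_def sx_def using cq_0 qpos sig by simp

lemma KKn: "KK m q n i s n = cq m q m"
  unfolding KK_def ix_def sx_def using n1 cq_Suc_m by simp

lemma p_eq: "j \<in> {1..n} \<Longrightarrow> DQ_p m q n i s j = KK m q n i s j - KK m q n i s (j-1)"
proof -
  assume j: "j \<in> {1..n}"
  have "cq m q (ix m n i (j+1)) - cq m q (ix m n i j) =
      (\<Sum>b\<in>{ix m n i j<..<ix m n i (j+1)}. qx m q b) + qx m q (ix m n i (j+1))"
    unfolding cq_def using ix_less[OF j] by (intro sum_atMost_split) simp
  then show ?thesis unfolding DQ_p_def KK_def using j by simp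
qed

lemma pe_eq: "j \<in> {1..n} \<Longrightarrow> DQ_pe m q \<sigma> n i s j = GG m q \<sigma> (KK m q n i s j) - GG m q \<sigma> (KK m q n i s (j-1))"
proof -
  assume j: "j \<in> {1..n}"
  have "(\<Sum>b\<le>ix m n i (j+1). qx m q b * \<sigma> b) - (\<Sum>b\<le>ix m n i j. qx m q b * \<sigma> b) =
      (\<Sum>b\<in>{ix m n i j<..<ix m n i (j+1)}. qx m q b * \<sigma> b) + qx m q (ix m n i (j+1)) * \<sigma> (ix m n i (j+1))"
    using ix_less[OF j] by (intro sum_atMost_split) simp
  moreover have "GG m q \<sigma> (KK m q n i s j) = (\<Sum>b\<le>ix m n i (j+1). qx m q b * \<sigma> b) - sx n s (j+1) * \<sigma> (ix m n i (j+1))"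
    unfolding KK_def using ix_bounds[of j] j by (intro GG_val) auto
  moreover have "GG m q \<sigma> (KK m q n i s (j-1)) = (\<Sum>b\<le>ix m n i j. qx m q b * \<sigma> b) - sx n s j * \<sigma> (ix m n i j)"
  proof -
    have jj: "j - 1 + 1 = j" using j by simp
    show ?thesis unfolding KK_def jj using ix_bounds[of "j-1"] j jj by (intro GG_val) auto
  qed
  ultimately show ?thesis unfolding DQ_pe_def by (simp add: algebra_simps)
qed

lemma KK_step: "j \<in> {1..n} \<Longrightarrow> KK m q n i s (j-1) < KK m q n i s j"
proof -
  assume j: "j \<in> {1..n}"
  have "DQ_p m q n i s j > 0" using ppos[OF j] .
  moreover have "DQ_p m q n i s j = KK m q n i s j - KK m q n i s (j-1)" using p_eq[OF j] .
  ultimately show ?thesis by linarith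
qed

lemma KK_strict: "a < b \<Longrightarrow> b \<le> n \<Longrightarrow> KK m q n i s a < KK m q n i s b"
proof (induction b)
  case 0 then show ?case by simp
next
  case (Suc b)
  have "KK m q n i s b < KK m q n i s (Suc b)" using KK_step[of "Suc b"] Suc.prems by simp
  then show ?case using Suc by (cases "a = b") auto
qed

lemma KK_mono: "a \<le> b \<Longrightarrow> b \<le> n \<Longrightarrow> KK m q n i s a \<le> KK m q n i s b"
  using KK_strict by (cases "a = b") (auto simp: less_imp_le)

lemma KK_range: "k \<le> n \<Longrightarrow> 0 \<le> KK m q n i s k \<and> KK m q n i s k \<le> cq m q m"
  using KK_mono[of 0 k] KK_mono[of k n] KK0 KKn by simp

lemma KK_atom:
  assumes "1 \<le> k" "k < n"
  shows "cq m q (ix m n i (k+1) - 1) \<le> KK m q n i s k \<and> KK m q n i s k \<le> cq m q (ix m n i (k+1))"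
proof -
  have a: "1 \<le> ix m n i (k+1)" using ix_mid[OF assms] by simp
  have b: "0 \<le> sx n s (k+1) \<and> sx n s (k+1) \<le> qx m q (ix m n i (k+1))" using ix_bounds[of k] assms by simp
  have "cq m q (ix m n i (k+1)) - qx m q (ix m n i (k+1)) = cq m q (ix m n i (k+1) - 1)" using cq_pred[OF a] .
  then show ?thesis using b unfolding KK_def by linarith
qed

lemma eps_le: "j \<in> {1..n} \<Longrightarrow> DQ_eps m q \<sigma> n i s j \<le> DQ_eps m q \<sigma> n i s n"
proof -
  assume j: "j \<in> {1..n}"
  have st: "\<forall>j\<in>{1..<n}. DQ_eps m q \<sigma> n i s j < DQ_eps m q \<sigma> n i s (j+1)"
    using P unfolding is_Pstar_degr_def by blast
  from j have "j \<le> n" by simp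
  then show ?thesis
  proof (induction rule: inc_induct)
    case base then show ?case by simp
  next
    case (step k)
    have "k \<in> {1..<n}" using step.hyps j by simp
    then have "DQ_eps m q \<sigma> n i s k < DQ_eps m q \<sigma> n i s (k+1)" using st by blast
    then show ?case using step.IH by simp
  qed
qed

lemma eps_half: "j \<in> {1..n} \<Longrightarrow> DQ_eps m q \<sigma> n i s j \<le> 1/2"
proof -
  assume j: "j \<in> {1..n}"
  have "DQ_eps m q \<sigma> n i s n \<le> 1/2" using P unfolding is_Pstar_degr_def by blast
  then show ?thesis using eps_le[OF j] by linarith
qed

lemma BW:
  assumes j: "j \<in> {1..n}" and a: "a \<in> {1..m}"
    and lo: "cq m q (a-1) \<le> KK m q n i s (j-1)" and hi: "KK m q n i s j \<le> cq m q a"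
  shows "KK m q n i s (j-1) = cq m q (a-1) \<and> KK m q n i s j = cq m q a"
proof -
  define \<alpha> where "\<alpha> = ix m n i j"
  define \<beta> where "\<beta> = ix m n i (j+1)"
  have ab: "\<alpha> < \<beta>" using ix_less[OF j] unfolding \<alpha>_def \<beta>_def by simp
  have am: "\<alpha> \<le> m" using ix_le_m[OF j] unfolding \<alpha>_def .
  have bm: "\<beta> \<le> Suc m" using ix_bounds[of j] j unfolding \<beta>_def by auto
  have sj: "0 \<le> sx n s j \<and> sx n s j \<le> qx m q \<alpha>" using ix_bounds[of "j-1"] j unfolding \<alpha>_def by auto
  have sj1: "0 \<le> sx n s (j+1) \<and> sx n s (j+1) \<le> qx m q \<beta>" using ix_bounds[of j] j unfolding \<beta>_def by auto
  have K0: "KK m q n i s (j-1) = cq m q \<alpha> - sx n s j" unfolding KK_def \<alpha>_def using j by simp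
  have K1: "KK m q n i s j = cq m q \<beta> - sx n s (j+1)" unfolding KK_def \<beta>_def by simp
  have st: "KK m q n i s (j-1) < KK m q n i s j" using KK_step[OF j] .
  note cqm = cq_mono and cql = cq_le_imp and cqp = cq_pred
  have cqb: "cq m q (\<beta> - 1) \<le> KK m q n i s j"
    using K1 sj1 cqp[of \<beta>] ab by auto
  show ?thesis
  proof (cases "\<beta> = \<alpha> + 1")
    case False
    then have b2: "\<alpha> + 1 \<le> \<beta> - 1" using ab by auto
    have "KK m q n i s (j-1) \<le> cq m q \<alpha>" using K0 sj by simp
    then have "cq m q (a-1) \<le> cq m q \<alpha>" using lo by simp
    then have "a - 1 \<le> \<alpha>" using cql a by auto
    have "cq m q (\<alpha>+1) \<le> cq m q (\<beta> - 1)" using cqm b2 by simp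
    then have "cq m q (\<alpha>+1) \<le> cq m q a" using cqb hi by simp
    then have "\<alpha> + 1 \<le> a" using cql b2 bm by auto
    then have aa: "a = \<alpha> + 1" using \<open>a - 1 \<le> \<alpha>\<close> by simp
    have "KK m q n i s (j-1) = cq m q (a-1)" using aa lo \<open>KK m q n i s (j-1) \<le> cq m q \<alpha>\<close> by simp
    moreover have "KK m q n i s j = cq m q a"
      using aa hi cqb \<open>cq m q (\<alpha>+1) \<le> cq m q (\<beta> - 1)\<close> by simp
    ultimately show ?thesis ..
  next
    case True
    have c3: "(sx n s j = 0 \<longrightarrow> sx n s (j+1) = 0) \<and> (sx n s (j+1) = qx m q \<beta> \<longrightarrow> sx n s j = qx m q \<alpha>)"
      using cond3[OF j] True unfolding \<alpha>_def \<beta>_def by simp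
    consider "sx n s j = 0" | "sx n s (j+1) = qx m q \<beta>" | "0 < sx n s j" "sx n s (j+1) < qx m q \<beta>"
      using sj sj1 by linarith
    then show ?thesis
    proof cases
      case 1
      then have e: "KK m q n i s (j-1) = cq m q \<alpha>" "KK m q n i s j = cq m q (\<alpha>+1)"
        using c3 K0 K1 True by auto
      have "\<alpha> + 1 \<le> m"
      proof (rule ccontr)
        assume "\<not> \<alpha> + 1 \<le> m"
        then have "\<alpha> = m" using am by simp
        then show False using e st cq_Suc_m by simp
      qed
      have "a - 1 \<le> \<alpha>" using cql a lo e by auto
      moreover have "\<alpha> + 1 \<le> a" using cql \<open>\<alpha> + 1 \<le> m\<close> hi e by auto
      ultimately have "a = \<alpha> + 1" by simp
      then show ?thesis using e by simp
    next
      case 2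
      then have e: "KK m q n i s (j-1) = cq m q \<alpha> - qx m q \<alpha>" "KK m q n i s j = cq m q \<alpha>"
        using c3 K0 K1 True cqp[of \<beta>] by auto
      have "1 \<le> \<alpha>"
      proof (rule ccontr)
        assume "\<not> 1 \<le> \<alpha>"
        then have "\<alpha> = 0" by simp
        then show False using e st by simp
      qed
      then have e': "KK m q n i s (j-1) = cq m q (\<alpha> - 1)" using e cqp by simp
      have "a - 1 \<le> \<alpha> - 1" using cql a lo e' \<open>1 \<le> \<alpha>\<close> am by auto
      moreover have "\<alpha> \<le> a" using cql am hi e by auto
      ultimately have "a = \<alpha>" using a \<open>1 \<le> \<alpha>\<close> by simp
      then show ?thesis using e e' by simp
    next
      case 3
      have "KK m q n i s (j-1) < cq m q \<alpha>" using K0 3 by simp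
      moreover have "cq m q \<alpha> < KK m q n i s j" using K1 3 True cqp[of \<beta>] by simp
      ultimately have "cq m q (a-1) < cq m q \<alpha>" "cq m q \<alpha> < cq m q a" using lo hi by auto
      then have "a - 1 < \<alpha>" "\<alpha> < a" using cq_less_imp by blast+
      then show ?thesis by linarith
    qed
  qed
qed

end
end



lemma find_interval:
  fixes f :: "nat \<Rightarrow> real"
  shows "f 0 < u \<Longrightarrow> u < f N \<Longrightarrow> (\<forall>j\<le>N. u \<noteq> f j) \<Longrightarrow> \<exists>j\<in>{1..N}. f (j-1) < u \<and> u < f j"
proof (induction N)
  case 0 then show ?case by simp
next
  case (Suc N)
  show ?case
  proof (cases "u < f N")
    case True
    then obtain j where "j \<in> {1..N}" "f (j-1) < u \<and> u < f j" using Suc by auto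
    then show ?thesis by force
  next
    case False
    have "u \<noteq> f N" using Suc.prems(3) by simp
    then have "f N < u" using False by linarith
    then show ?thesis using Suc.prems(2) by force
  qed
qed

lemma sum_prefix:
  fixes f g :: "nat \<Rightarrow> real"
  assumes "k \<le> n" "\<forall>j\<in>{1..n}. g j = (if j \<le> k then 1 else 0)"
  shows "(\<Sum>j\<in>{1..n}. g j * f j) = (\<Sum>j\<in>{1..k}. f j)"
proof -
  have "(\<Sum>j\<in>{1..n}. g j * f j) = (\<Sum>j\<in>{1..n}. if j \<in> {..k} then f j else 0)"
    using assms(2) by (intro sum.cong) auto
  also have "\<dots> = (\<Sum>j\<in>{1..n} \<inter> {..k}. f j)" by (rule sum.inter_restrict[symmetric]) simp
  also have "{1..n} \<inter> {..k} = {1..k}" using assms(1) by auto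
  finally show ?thesis .
qed

lemma pos_weighted:
  fixes c f :: "nat \<Rightarrow> real"
  assumes "finite S" "\<forall>x\<in>S. 0 \<le> f x" "\<forall>x\<in>S. 0 < c x" "(\<Sum>x\<in>S. f x) > 0"
  shows "(\<Sum>x\<in>S. c x * f x) > 0"
proof -
  obtain x where x: "x \<in> S" "f x > 0"
  proof (rule ccontr)
    assume "\<not> thesis"
    then have "\<forall>x\<in>S. f x \<le> 0" using that by force
    then have "(\<Sum>x\<in>S. f x) \<le> 0" by (intro sum_nonpos) auto
    then show False using assms(4) by simp
  qed
  have "0 < c x * f x" using x assms(3) by simp
  also have "\<dots> \<le> (\<Sum>x\<in>S. c x * f x)"
    using assms x by (intro member_le_sum) (auto intro: mult_nonneg_nonneg less_imp_le)
  finally show ?thesis .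
qed

lemma split_m:
  fixes f :: "nat \<Rightarrow> real"
  assumes "a0 \<in> {1..m}"
  shows "(\<Sum>b\<in>{1..m}. f b) = (\<Sum>b\<in>{1..<a0}. f b) + f a0 + (\<Sum>b\<in>{a0<..m}. f b)"
proof -
  have e: "{1..m} = insert a0 ({1..<a0} \<union> {a0<..m})" using assms by auto
  have "(\<Sum>b\<in>{1..m}. f b) = f a0 + (\<Sum>b\<in>{1..<a0} \<union> {a0<..m}. f b)"
    unfolding e by (subst sum.insert) auto
  also have "(\<Sum>b\<in>{1..<a0} \<union> {a0<..m}. f b) = (\<Sum>b\<in>{1..<a0}. f b) + (\<Sum>b\<in>{a0<..m}. f b)"
    by (subst sum.union_disjoint) auto
  finally show ?thesis by simp
qed

context QQ
begin

context
  fixes n :: nat and i :: "nat \<Rightarrow> nat" and s :: "nat \<Rightarrow> real"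
  assumes n1: "1 \<le> n" and P: "is_Pstar_degr m q \<sigma> n i s"
begin

abbreviation "K \<equiv> KK m q n i s"

lemma sum_p: "k \<le> n \<Longrightarrow> (\<Sum>j\<in>{1..k}. DQ_p m q n i s j) = K k"
proof (induction k)
  case 0 then show ?case using KK0[OF n1 P] by simp
next
  case (Suc k)
  have "DQ_p m q n i s (Suc k) = K (Suc k) - K k" using p_eq[OF n1 P, of "Suc k"] Suc.prems by simp
  then show ?case using Suc by simp
qed

lemma g_facts:
  assumes a0: "a0 \<in> {1..m}" and u: "cq m q (a0-1) \<le> u" "u \<le> cq m q a0"
    and g: "\<forall>j\<in>{1..n}. 0 \<le> g j \<and> g j \<le> 1"
    and gs: "(\<Sum>j\<in>{1..n}. g j * DQ_p m q n i s j) = u"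
    and ge: "(\<Sum>j\<in>{1..n}. g j * DQ_pe m q \<sigma> n i s j) \<le> GG m q \<sigma> u"
  shows "\<forall>j\<in>{1..n}. (K (j-1) < cq m q (a0-1) \<longrightarrow> g j = 1) \<and> (K j > cq m q a0 \<longrightarrow> g j = 0)"
proof -
  define \<theta> where "\<theta> = \<sigma> a0"
  define \<Delta> where "\<Delta> j b = clampb m q b (K j) - clampb m q b (K (j-1))" for j b
  define Lm where "Lm j = (\<Sum>b\<in>{1..<a0}. (\<theta> - \<sigma> b) * \<Delta> j b)" for j
  define Up where "Up j = (\<Sum>b\<in>{a0<..m}. (\<sigma> b - \<theta>) * \<Delta> j b)" for j
  have Krange: "0 \<le> K k \<and> K k \<le> cq m q m" if "k \<le> n" for k using KK_range[OF n1 P that] .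
  have u0: "0 \<le> u" "u \<le> cq m q m"
    using u cq_mono[of 0 "a0-1"] cq_mono[of a0 m] a0 by auto
  have Dnn: "\<Delta> j b \<ge> 0" if "j \<in> {1..n}" for j b
    unfolding \<Delta>_def using clamp_mono[of "K (j-1)" "K j" b] KK_step[OF n1 P that] by simp
  have pD: "DQ_p m q n i s j = (\<Sum>b\<in>{1..m}. \<Delta> j b)" if j: "j \<in> {1..n}" for j
  proof -
    have "(\<Sum>b\<in>{1..m}. \<Delta> j b) = (\<Sum>b\<in>{1..m}. clampb m q b (K j)) - (\<Sum>b\<in>{1..m}. clampb m q b (K (j-1)))"
      unfolding \<Delta>_def by (simp add: sum_subtractf)
    also have "\<dots> = K j - K (j-1)"
    proof -
      have "j - 1 \<le> n" using j by auto
      then have k1: "0 \<le> K (j-1) \<and> K (j-1) \<le> cq m q m" using Krange by blast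
      have k2: "0 \<le> K j \<and> K j \<le> cq m q m" using Krange j by simp
      show ?thesis using sum_clamp_m k1 k2 by simp
    qed
    finally show ?thesis using p_eq[OF n1 P j] by simp
  qed
  have peD: "DQ_pe m q \<sigma> n i s j = (\<Sum>b\<in>{1..m}. \<sigma> b * \<Delta> j b)" if j: "j \<in> {1..n}" for j
    unfolding pe_eq[OF n1 P j] GG_def \<Delta>_def by (simp add: sum_subtractf algebra_simps)
  have A: "DQ_pe m q \<sigma> n i s j - \<theta> * DQ_p m q n i s j = Up j - Lm j" if j: "j \<in> {1..n}" for j
  proof -
    have "DQ_pe m q \<sigma> n i s j - \<theta> * DQ_p m q n i s j = (\<Sum>b\<in>{1..m}. (\<sigma> b - \<theta>) * \<Delta> j b)"
      using peD[OF j] pD[OF j] by (simp add: sum_distrib_left sum_subtractf algebra_simps)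
    also have "\<dots> = (\<Sum>b\<in>{1..<a0}. (\<sigma> b - \<theta>) * \<Delta> j b) + (\<sigma> a0 - \<theta>) * \<Delta> j a0 + Up j"
      unfolding Up_def by (rule split_m[OF a0])
    also have "(\<Sum>b\<in>{1..<a0}. (\<sigma> b - \<theta>) * \<Delta> j b) = - Lm j"
      unfolding Lm_def by (simp add: sum_negf[symmetric] algebra_simps)
    finally show ?thesis unfolding \<theta>_def by simp
  qed
  have cu_lo: "clampb m q b u = qx m q b" if "b \<in> {1..<a0}" for b
  proof -
    have "cq m q b \<le> cq m q (a0-1)" using that by (intro cq_mono) auto
    then show ?thesis using clamp_hi[of b u] that u by auto
  qed
  have cu_hi: "clampb m q b u = 0" if "b \<in> {a0<..m}" for b
  proof -
    have "cq m q a0 \<le> cq m q (b-1)" using that by (intro cq_mono) auto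
    then show ?thesis using clamp_lo[of u b] u by auto
  qed
  have tele: "(\<Sum>j\<in>{1..n}. \<Delta> j b) = qx m q b" if "b \<in> {1..m}" for b
  proof -
    have "(\<Sum>j\<in>{1..k}. \<Delta> j b) = clampb m q b (K k) - clampb m q b (K 0)" for k
      by (induction k) (auto simp: \<Delta>_def)
    then have "(\<Sum>j\<in>{1..n}. \<Delta> j b) = clampb m q b (cq m q m) - clampb m q b 0"
      using KK0[OF n1 P] KKn[OF n1 P] by simp
    moreover have "clampb m q b (cq m q m) = qx m q b" using that cq_mono[of b m] by (intro clamp_hi) auto
    moreover have "clampb m q b 0 = 0" using cq_mono[of 0 "b-1"] by (intro clamp_lo) auto
    ultimately show ?thesis by simp
  qed
  have R: "GG m q \<sigma> u - \<theta> * u = - (\<Sum>j\<in>{1..n}. Lm j)"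
  proof -
    have "GG m q \<sigma> u - \<theta> * u = (\<Sum>b\<in>{1..m}. (\<sigma> b - \<theta>) * clampb m q b u)"
      unfolding GG_def using sum_clamp_m[OF u0] by (simp add: sum_distrib_left[symmetric] sum_subtractf algebra_simps)
    also have "\<dots> = (\<Sum>b\<in>{1..<a0}. (\<sigma> b - \<theta>) * clampb m q b u) + (\<sigma> a0 - \<theta>) * clampb m q a0 u
        + (\<Sum>b\<in>{a0<..m}. (\<sigma> b - \<theta>) * clampb m q b u)"
      by (rule split_m[OF a0])
    also have "(\<Sum>b\<in>{a0<..m}. (\<sigma> b - \<theta>) * clampb m q b u) = 0" using cu_hi by simp
    also have "(\<Sum>b\<in>{1..<a0}. (\<sigma> b - \<theta>) * clampb m q b u) = (\<Sum>b\<in>{1..<a0}. (\<sigma> b - \<theta>) * (\<Sum>j\<in>{1..n}. \<Delta> j b))"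
      using cu_lo tele a0 by (intro sum.cong) auto
    also have "\<dots> = (\<Sum>j\<in>{1..n}. \<Sum>b\<in>{1..<a0}. (\<sigma> b - \<theta>) * \<Delta> j b)"
      unfolding sum_distrib_left by (rule sum.swap)
    also have "\<dots> = - (\<Sum>j\<in>{1..n}. Lm j)"
      unfolding Lm_def by (simp add: sum_negf[symmetric] algebra_simps)
    finally show ?thesis unfolding \<theta>_def by simp
  qed
  have Lnn: "Lm j \<ge> 0" if "j \<in> {1..n}" for j
    unfolding Lm_def using Dnn[OF that] sig_less a0 unfolding \<theta>_def
    by (intro sum_nonneg mult_nonneg_nonneg) (auto intro: less_imp_le)
  have Unn: "Up j \<ge> 0" if "j \<in> {1..n}" for j
    unfolding Up_def using Dnn[OF that] sig_less a0 unfolding \<theta>_def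
    by (intro sum_nonneg mult_nonneg_nonneg) (auto intro: less_imp_le)
  have main: "(\<Sum>j\<in>{1..n}. g j * Up j + (1 - g j) * Lm j) \<le> 0"
  proof -
    have "(\<Sum>j\<in>{1..n}. g j * (DQ_pe m q \<sigma> n i s j - \<theta> * DQ_p m q n i s j)) \<le> GG m q \<sigma> u - \<theta> * u"
      using ge gs by (simp add: algebra_simps sum_subtractf sum_distrib_left[symmetric] mult.left_commute)
    then have "(\<Sum>j\<in>{1..n}. g j * (Up j - Lm j)) \<le> - (\<Sum>j\<in>{1..n}. Lm j)"
      using A R by simp
    then show ?thesis by (simp add: algebra_simps sum.distrib sum_subtractf)
  qed
  have zero: "g j * Up j + (1 - g j) * Lm j = 0" if j: "j \<in> {1..n}" for j
  proof -
    have nn: "\<forall>j\<in>{1..n}. 0 \<le> g j * Up j + (1 - g j) * Lm j"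
      using g Lnn Unn by (auto intro!: add_nonneg_nonneg mult_nonneg_nonneg)
    then have "(\<Sum>j\<in>{1..n}. g j * Up j + (1 - g j) * Lm j) = 0" using main
      by (meson order_antisym sum_nonneg)
    then show ?thesis using nn j by (subst (asm) sum_nonneg_eq_0_iff) auto
  qed
  have Kp: "0 \<le> K (j-1)" "0 \<le> K j" if "j \<in> {1..n}" for j
  proof -
    have "j - 1 \<le> n" using that by auto
    then show "0 \<le> K (j-1)" using Krange by blast
    show "0 \<le> K j" using Krange that by auto
  qed
  show ?thesis
  proof (intro ballI conjI impI)
    fix j assume j: "j \<in> {1..n}" and lt: "K (j-1) < cq m q (a0-1)"
    have st: "K (j-1) < K j" using KK_step[OF n1 P j] .
    have "(\<Sum>b\<in>{1..a0-1}. \<Delta> j b) = min (K j) (cq m q (a0-1)) - min (K (j-1)) (cq m q (a0-1))"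
      unfolding \<Delta>_def using sum_clamp Kp[OF j] by (simp add: sum_subtractf)
    also have "min (K (j-1)) (cq m q (a0-1)) = K (j-1)" using lt by simp
    also have "min (K j) (cq m q (a0-1)) - K (j-1) > 0" using lt st by (simp add: min_def)
    finally have pos: "(\<Sum>b\<in>{1..a0-1}. \<Delta> j b) > 0" .
    have "{1..<a0} = {1..a0-1}" using a0 by auto
    with pos have pos': "(\<Sum>b\<in>{1..<a0}. \<Delta> j b) > 0" by simp
    have c1: "\<forall>b\<in>{1..<a0}. 0 \<le> \<Delta> j b" using Dnn[OF j] by blast
    have c2: "\<forall>b\<in>{1..<a0}. 0 < \<theta> - \<sigma> b"
    proof
      fix b assume "b \<in> {1..<a0}"
      then have "\<sigma> b < \<sigma> a0" using sig_less a0 by simp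
      then show "0 < \<theta> - \<sigma> b" unfolding \<theta>_def by simp
    qed
    have Lp: "Lm j > 0" unfolding Lm_def using pos_weighted[OF _ c1 c2 pos'] by simp
    have z: "g j * Up j + (1 - g j) * Lm j = 0" using zero[OF j] .
    have "g j * Up j \<ge> 0" "(1 - g j) * Lm j \<ge> 0" using g j Unn[OF j] Lnn[OF j] by auto
    then have "(1 - g j) * Lm j = 0" using z by linarith
    then have "1 - g j = 0" using Lp by simp
    then show "g j = 1" by simp
  next
    fix j assume j: "j \<in> {1..n}" and gt: "K j > cq m q a0"
    have st: "K (j-1) < K j" using KK_step[OF n1 P j] .
    have e1: "(\<Sum>b\<in>{1..m}. \<Delta> j b) = (\<Sum>b\<in>{1..a0}. \<Delta> j b) + (\<Sum>b\<in>{a0<..m}. \<Delta> j b)"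
    proof -
      have "{1..m} = {1..a0} \<union> {a0<..m}" using a0 by auto
      then show ?thesis by (simp only:) (rule sum.union_disjoint, auto)
    qed
    have e2: "(\<Sum>b\<in>{1..m}. \<Delta> j b) = K j - K (j-1)" using pD[OF j] p_eq[OF n1 P j] by simp
    have e3: "(\<Sum>b\<in>{1..a0}. \<Delta> j b) = min (K j) (cq m q a0) - min (K (j-1)) (cq m q a0)"
      unfolding \<Delta>_def using sum_clamp Kp[OF j] by (simp add: sum_subtractf)
    have e4: "min (K j) (cq m q a0) = cq m q a0" using gt by simp
    have "min (K (j-1)) (cq m q a0) > K (j-1) - (K j - cq m q a0)" using gt st by (simp add: min_def)
    then have pos: "(\<Sum>b\<in>{a0<..m}. \<Delta> j b) > 0" using e1 e2 e3 e4 by linarith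
    have c1: "\<forall>b\<in>{a0<..m}. 0 \<le> \<Delta> j b" using Dnn[OF j] by blast
    have c2: "\<forall>b\<in>{a0<..m}. 0 < \<sigma> b - \<theta>"
    proof
      fix b assume "b \<in> {a0<..m}"
      then have "\<sigma> a0 < \<sigma> b" using sig_less a0 by simp
      then show "0 < \<sigma> b - \<theta>" unfolding \<theta>_def by simp
    qed
    have Upp: "Up j > 0" unfolding Up_def using pos_weighted[OF _ c1 c2 pos] by simp
    have z: "g j * Up j + (1 - g j) * Lm j = 0" using zero[OF j] .
    have "g j * Up j \<ge> 0" "(1 - g j) * Lm j \<ge> 0" using g j Unn[OF j] Lnn[OF j] by auto
    then have "g j * Up j = 0" using z by linarith
    then show "g j = 0" using Upp by simp
  qed
qed

end
end



lemma knots_equal: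
  fixes u u' :: "nat \<Rightarrow> real"
  assumes su: "\<And>a b. a < b \<Longrightarrow> b \<le> n \<Longrightarrow> u a < u b"
    and su': "\<And>a b. a < b \<Longrightarrow> b \<le> n \<Longrightarrow> u' a < u' b"
    and e0: "u 0 = u' 0" and en: "u n = u' n"
    and loc: "\<forall>k\<in>{1..<n}. (\<exists>j\<le>n. u k = u' j) \<or>
       (\<exists>j\<in>{1..n}. u' (j-1) < u k \<and> u k < u' j \<and> u (k-1) < u' (j-1) \<and> u' j < u (k+1))"
  shows "\<forall>k\<le>n. u k = u' k"
proof -
  have mu: "a \<le> b \<Longrightarrow> b \<le> n \<Longrightarrow> u a \<le> u b" for a b using su[of a b] by (cases "a = b") auto
  have mu': "a \<le> b \<Longrightarrow> b \<le> n \<Longrightarrow> u' a \<le> u' b" for a b using su'[of a b] by (cases "a = b") auto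
  have A: "k \<le> n \<Longrightarrow> u' k \<le> u k" for k
  proof (induction k)
    case 0 then show ?case using e0 by simp
  next
    case (Suc k)
    have IH: "u' k \<le> u k" using Suc by simp
    have sk: "u k < u (Suc k)" using su[of k "Suc k"] Suc.prems by simp
    show ?case
    proof (cases "Suc k = n")
      case True then show ?thesis using en by simp
    next
      case False
      then have "Suc k \<in> {1..<n}" using Suc.prems by simp
      then have "(\<exists>j\<le>n. u (Suc k) = u' j) \<or>
       (\<exists>j\<in>{1..n}. u' (j-1) < u (Suc k) \<and> u (Suc k) < u' j \<and> u (Suc k-1) < u' (j-1) \<and> u' j < u (Suc k+1))"
        using loc by blast
      then show ?thesis
      proof
        assume "\<exists>j\<le>n. u (Suc k) = u' j"
        then obtain j where j: "j \<le> n" "u (Suc k) = u' j" by blast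
        show ?thesis
        proof (cases "j \<le> k")
          case True
          then have "u' j \<le> u' k" using mu' Suc.prems by simp
          then show ?thesis using IH sk j by simp
        next
          case False
          then show ?thesis using mu'[of "Suc k" j] j by simp
        qed
      next
        assume "\<exists>j\<in>{1..n}. u' (j-1) < u (Suc k) \<and> u (Suc k) < u' j \<and> u (Suc k-1) < u' (j-1) \<and> u' j < u (Suc k+1)"
        then obtain j where j: "j \<in> {1..n}" "u' (j-1) < u (Suc k)" "u k < u' (j-1)" by auto
        show ?thesis
        proof (cases "j - 1 \<le> k")
          case True
          then have "u' (j-1) \<le> u' k" using mu' Suc.prems by simp
          then show ?thesis using IH j by simp
        next
          case False
          have "j - 1 \<le> n" using j by auto
          then have "u' (Suc k) \<le> u' (j-1)" using mu'[of "Suc k" "j-1"] False by simp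
          then show ?thesis using j by simp
        qed
      qed
    qed
  qed
  have B: "d \<le> n \<Longrightarrow> u (n-d) = u' (n-d)" for d
  proof (induction d)
    case 0 then show ?case using en by simp
  next
    case (Suc d)
    define k where "k = n - Suc d"
    have k1: "k + 1 = n - d" "k < n" using Suc.prems unfolding k_def by auto
    have IH: "u (k+1) = u' (k+1)" using Suc k1 by simp
    show ?case
    proof (cases "k = 0")
      case True then show ?thesis using e0 k_def by simp
    next
      case False
      then have "k \<in> {1..<n}" using k1 by simp
      then have "(\<exists>j\<le>n. u k = u' j) \<or>
       (\<exists>j\<in>{1..n}. u' (j-1) < u k \<and> u k < u' j \<and> u (k-1) < u' (j-1) \<and> u' j < u (k+1))"
        using loc by blast
      then show ?thesis unfolding k_def[symmetric]
      proof
        assume "\<exists>j\<le>n. u k = u' j"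
        then obtain j where j: "j \<le> n" "u k = u' j" by blast
        have "u' k \<le> u k" using A k1 by simp
        then have "k \<le> j" using su'[of j k] j k1 by force
        moreover have "u k < u (k+1)" using su[of k "k+1"] k1 by simp
        then have "j < k + 1" using mu'[of "k+1" j] j IH by force
        ultimately have "j = k" by simp
        then show "u k = u' k" using j by simp
      next
        assume "\<exists>j\<in>{1..n}. u' (j-1) < u k \<and> u k < u' j \<and> u (k-1) < u' (j-1) \<and> u' j < u (k+1)"
        then obtain j where j: "j \<in> {1..n}" "u k < u' j" "u' j < u (k+1)" by auto
        have "j < k + 1" using mu'[of "k+1" j] j IH by force
        then have "u' j \<le> u' k" using mu' k1 by simp
        moreover have "u' k \<le> u k" using A k1 by simp
        ultimately show "u k = u' k" using j by simp
      qed
    qed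
  qed
  show ?thesis
  proof (intro allI impI)
    fix k assume "k \<le> n"
    then show "u k = u' k" using B[of "n-k"] by simp
  qed
qed

context QQ
begin

context
  fixes n :: nat and i :: "nat \<Rightarrow> nat" and s :: "nat \<Rightarrow> real"
  assumes n1: "1 \<le> n" and P: "is_Pstar_degr m q \<sigma> n i s"
begin

lemma local_knot:
  assumes a0: "a0 \<in> {1..m}" and u: "cq m q (a0-1) \<le> u" "u \<le> cq m q a0"
    and g: "\<forall>j\<in>{1..n}. 0 \<le> g j \<and> g j \<le> 1"
    and gs: "(\<Sum>j\<in>{1..n}. g j * DQ_p m q n i s j) = u"
    and ge: "(\<Sum>j\<in>{1..n}. g j * DQ_pe m q \<sigma> n i s j) \<le> GG m q \<sigma> u"
  shows "(\<exists>j\<in>{1..n}. KK m q n i s (j-1) = cq m q (a0-1) \<and> KK m q n i s j = cq m q a0) \<or> (\<exists>j\<le>n. u = KK m q n i s j)"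
proof (rule disjCI)
  let ?K = "KK m q n i s"
  let ?L = "cq m q (a0-1)" and ?R = "cq m q a0"
  assume nk: "\<not> (\<exists>j\<le>n. u = ?K j)"
  have gf: "\<forall>j\<in>{1..n}. (?K (j-1) < ?L \<longrightarrow> g j = 1) \<and> (?K j > ?R \<longrightarrow> g j = 0)"
    using g_facts[OF n1 P a0 u g gs ge] .
  have u0: "0 \<le> u" "u \<le> cq m q m"
    using u cq_mono[of 0 "a0-1"] cq_mono[of a0 m] a0 by auto
  have "?K 0 < u" using u0 nk KK0[OF n1 P] by (metis order_le_less zero_le)
  moreover have "u < ?K n" using u0 nk KKn[OF n1 P] by (metis order_le_less order_refl)
  ultimately obtain j0 where j0: "j0 \<in> {1..n}" "?K (j0-1) < u" "u < ?K j0"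
    using find_interval[of ?K u n] nk by auto
  have mono: "a \<le> b \<Longrightarrow> b \<le> n \<Longrightarrow> ?K a \<le> ?K b" for a b using KK_mono[OF n1 P] by blast
  have strict: "a < b \<Longrightarrow> b \<le> n \<Longrightarrow> ?K a < ?K b" for a b using KK_strict[OF n1 P] by blast
  have BW': "j \<in> {1..n} \<Longrightarrow> ?L \<le> ?K (j-1) \<Longrightarrow> ?K j \<le> ?R \<Longrightarrow> ?K (j-1) = ?L \<and> ?K j = ?R" for j
    using BW[OF n1 P _ a0] by blast
  consider "?K (j0-1) < ?L" "?K j0 > ?R" | "?K (j0-1) < ?L" "?K j0 \<le> ?R" | "?K (j0-1) \<ge> ?L" "?K j0 > ?R"
    | "?K (j0-1) \<ge> ?L" "?K j0 \<le> ?R" by linarith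
  then show "\<exists>j\<in>{1..n}. ?K (j-1) = ?L \<and> ?K j = ?R"
  proof cases
    case 1 then show ?thesis using gf j0 by force
  next
    case 2
    have gg: "\<forall>j\<in>{1..n}. g j = (if j \<le> j0 then 1 else 0)"
    proof
      fix j assume j: "j \<in> {1..n}"
      show "g j = (if j \<le> j0 then 1 else 0)"
      proof (cases "j \<le> j0")
        case True
        have "j - 1 \<le> j0 - 1" "j0 - 1 \<le> n" using True j0 by auto
        then have "?K (j-1) \<le> ?K (j0-1)" using mono by blast
        then show ?thesis using gf j True 2 by simp
      next
        case False
        have "?K j > ?R"
        proof (rule ccontr)
          assume "\<not> ?K j > ?R"
          moreover have "?K j0 \<le> ?K (j-1)" using mono False j by simp
          ultimately have "?K (j-1) = ?L" using BW'[OF j] j0 u by simp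
          then show False using \<open>?K j0 \<le> ?K (j-1)\<close> j0 u by simp
        qed
        then show ?thesis using gf j False by simp
      qed
    qed
    have "u = (\<Sum>j\<in>{1..j0}. DQ_p m q n i s j)" using gs sum_prefix[of j0 n g] gg j0 by simp
    also have "\<dots> = ?K j0" using sum_p[OF n1 P] j0 by simp
    finally show ?thesis using j0 by simp
  next
    case 3
    have gg: "\<forall>j\<in>{1..n}. g j = (if j \<le> j0 - 1 then 1 else 0)"
    proof
      fix j assume j: "j \<in> {1..n}"
      show "g j = (if j \<le> j0 - 1 then 1 else 0)"
      proof (cases "j \<le> j0 - 1")
        case True
        have "?K (j-1) < ?L"
        proof (rule ccontr)
          assume "\<not> ?K (j-1) < ?L"
          moreover have "?K j \<le> ?K (j0-1)"
          proof -
            have "j0 - 1 \<le> n" using j0 by auto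
            then show ?thesis using mono True by blast
          qed
          ultimately have "?K j = ?R" using BW'[OF j] j0 u by simp
          then show False using \<open>?K j \<le> ?K (j0-1)\<close> j0 u by simp
        qed
        then show ?thesis using gf j True by simp
      next
        case False
        then have "?K j0 \<le> ?K j" using mono j by simp
        then show ?thesis using gf j False 3 by simp
      qed
    qed
    have "j0 - 1 \<le> n" using j0 by auto
    then have "u = (\<Sum>j\<in>{1..j0-1}. DQ_p m q n i s j)" using gs sum_prefix[of "j0-1" n g] gg by simp
    also have "\<dots> = ?K (j0-1)" using sum_p[OF n1 P, of "j0-1"] \<open>j0 - 1 \<le> n\<close> by simp
    finally show ?thesis using j0 by simp
  next
    case 4 then show ?thesis using BW' j0 by blast
  qed
qed

end
end



context QQ
begin

context
  fixes n :: nat and i :: "nat \<Rightarrow> nat" and s :: "nat \<Rightarrow> real"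
  assumes n1: "1 \<le> n" and P: "is_Pstar_degr m q \<sigma> n i s"
begin

lemma DQ_fst: "fst (DQ m q \<sigma> n i s) = {y. y div 2 \<in> {1..n}}"
proof -
  have "{j\<in>{1..n}. DQ_p m q n i s j > 0} = {1..n}" using ppos[OF n1 P] by auto
  then show ?thesis unfolding DQ_def bsc_mix_def by simp
qed

lemma DQ_finite: "finite (fst (DQ m q \<sigma> n i s))"
proof -
  have "{y. y div 2 \<in> {1..n}} \<subseteq> {..2*n+1}" by auto
  then show ?thesis unfolding DQ_fst using finite_subset by blast
qed

lemma DQ_vals:
  assumes j: "j \<in> {1..n}"
  shows "snd (DQ m q \<sigma> n i s) 0 (2*j) + snd (DQ m q \<sigma> n i s) 1 (2*j) = DQ_p m q n i s j"
    "snd (DQ m q \<sigma> n i s) 0 (2*j+1) + snd (DQ m q \<sigma> n i s) 1 (2*j+1) = DQ_p m q n i s j"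
    "min (snd (DQ m q \<sigma> n i s) 0 (2*j)) (snd (DQ m q \<sigma> n i s) 1 (2*j)) = DQ_pe m q \<sigma> n i s j"
    "min (snd (DQ m q \<sigma> n i s) 0 (2*j+1)) (snd (DQ m q \<sigma> n i s) 1 (2*j+1)) = DQ_pe m q \<sigma> n i s j"
proof -
  let ?p = "DQ_p m q n i s j" and ?e = "DQ_eps m q \<sigma> n i s j"
  have p: "?p > 0" using ppos[OF n1 P j] .
  have e: "?e \<le> 1/2" using eps_half[OF n1 P j] .
  have pe: "?p * ?e = DQ_pe m q \<sigma> n i s j" unfolding DQ_eps_def using p by simp
  have d1: "(2*j) div 2 = j" "(2*j+1) div 2 = j" "(2*j) mod 2 = 0" "(2*j+1) mod 2 = 1" by auto
  have v: "snd (DQ m q \<sigma> n i s) 0 (2*j) = ?p * (1 - ?e)" "snd (DQ m q \<sigma> n i s) 1 (2*j) = ?p * ?e"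
    "snd (DQ m q \<sigma> n i s) 0 (2*j+1) = ?p * ?e" "snd (DQ m q \<sigma> n i s) 1 (2*j+1) = ?p * (1 - ?e)"
    unfolding DQ_def bsc_mix_def snd_conv d1 by simp_all
  have mn: "min (?p * (1 - ?e)) (?p * ?e) = ?p * ?e" "min (?p * ?e) (?p * (1 - ?e)) = ?p * ?e"
    using p e by (auto simp: min_def intro: mult_left_mono)
  show "snd (DQ m q \<sigma> n i s) 0 (2*j) + snd (DQ m q \<sigma> n i s) 1 (2*j) = ?p"
    "snd (DQ m q \<sigma> n i s) 0 (2*j+1) + snd (DQ m q \<sigma> n i s) 1 (2*j+1) = ?p"
    using v by (simp_all add: algebra_simps)
  show "min (snd (DQ m q \<sigma> n i s) 0 (2*j)) (snd (DQ m q \<sigma> n i s) 1 (2*j)) = DQ_pe m q \<sigma> n i s j"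
    "min (snd (DQ m q \<sigma> n i s) 0 (2*j+1)) (snd (DQ m q \<sigma> n i s) 1 (2*j+1)) = DQ_pe m q \<sigma> n i s j"
    using v mn pe by simp_all
qed

lemma DQ_sum_w: "(\<Sum>y\<in>fst (DQ m q \<sigma> n i s). h y * (snd (DQ m q \<sigma> n i s) 0 y + snd (DQ m q \<sigma> n i s) 1 y))
   = (\<Sum>j\<in>{1..n}. DQ_p m q n i s j * (h (2*j) + h (2*j+1)))"
proof -
  have "(\<Sum>y\<in>fst (DQ m q \<sigma> n i s). h y * (snd (DQ m q \<sigma> n i s) 0 y + snd (DQ m q \<sigma> n i s) 1 y))
    = (\<Sum>j\<in>{1..n}. h (2*j) * (snd (DQ m q \<sigma> n i s) 0 (2*j) + snd (DQ m q \<sigma> n i s) 1 (2*j))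
         + h (2*j+1) * (snd (DQ m q \<sigma> n i s) 0 (2*j+1) + snd (DQ m q \<sigma> n i s) 1 (2*j+1)))"
    unfolding DQ_fst by (rule bsc_sum) simp
  also have "\<dots> = (\<Sum>j\<in>{1..n}. DQ_p m q n i s j * (h (2*j) + h (2*j+1)))"
  proof (rule sum.cong[OF refl])
    fix j assume j: "j \<in> {1..n}"
    show "h (2*j) * (snd (DQ m q \<sigma> n i s) 0 (2*j) + snd (DQ m q \<sigma> n i s) 1 (2*j))
         + h (2*j+1) * (snd (DQ m q \<sigma> n i s) 0 (2*j+1) + snd (DQ m q \<sigma> n i s) 1 (2*j+1))
         = DQ_p m q n i s j * (h (2*j) + h (2*j+1))"
      unfolding DQ_vals(1,2)[OF j] by (simp add: algebra_simps)
  qed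
  finally show ?thesis .
qed

lemma DQ_sum_min: "(\<Sum>y\<in>fst (DQ m q \<sigma> n i s). h y * min (snd (DQ m q \<sigma> n i s) 0 y) (snd (DQ m q \<sigma> n i s) 1 y))
   = (\<Sum>j\<in>{1..n}. DQ_pe m q \<sigma> n i s j * (h (2*j) + h (2*j+1)))"
proof -
  have "(\<Sum>y\<in>fst (DQ m q \<sigma> n i s). h y * min (snd (DQ m q \<sigma> n i s) 0 y) (snd (DQ m q \<sigma> n i s) 1 y))
    = (\<Sum>j\<in>{1..n}. h (2*j) * min (snd (DQ m q \<sigma> n i s) 0 (2*j)) (snd (DQ m q \<sigma> n i s) 1 (2*j))
         + h (2*j+1) * min (snd (DQ m q \<sigma> n i s) 0 (2*j+1)) (snd (DQ m q \<sigma> n i s) 1 (2*j+1)))"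
    unfolding DQ_fst by (rule bsc_sum) simp
  also have "\<dots> = (\<Sum>j\<in>{1..n}. DQ_pe m q \<sigma> n i s j * (h (2*j) + h (2*j+1)))"
  proof (rule sum.cong[OF refl])
    fix j assume j: "j \<in> {1..n}"
    show "h (2*j) * min (snd (DQ m q \<sigma> n i s) 0 (2*j)) (snd (DQ m q \<sigma> n i s) 1 (2*j))
         + h (2*j+1) * min (snd (DQ m q \<sigma> n i s) 0 (2*j+1)) (snd (DQ m q \<sigma> n i s) 1 (2*j+1))
         = DQ_pe m q \<sigma> n i s j * (h (2*j) + h (2*j+1))"
      unfolding DQ_vals(3,4)[OF j] by (simp add: algebra_simps)
  qed
  finally show ?thesis .
qed

lemma sum_pe: "k \<le> n \<Longrightarrow> (\<Sum>j\<in>{1..k}. DQ_pe m q \<sigma> n i s j) = GG m q \<sigma> (KK m q n i s k)"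
proof (induction k)
  case 0
  have "GG m q \<sigma> 0 = 0" unfolding GG_def using clamp_lo[of 0] cq_mono[of 0] by (simp add: cq_0)
  then show ?case using KK0[OF n1 P] by simp
next
  case (Suc k)
  have "DQ_pe m q \<sigma> n i s (Suc k) = GG m q \<sigma> (KK m q n i s (Suc k)) - GG m q \<sigma> (KK m q n i s k)"
    using pe_eq[OF n1 P, of "Suc k"] Suc.prems by simp
  then show ?case using Suc by simp
qed

end
end

theorem theorem4:
  fixes n m :: nat and q \<sigma> :: "nat \<Rightarrow> real"
    and i i' :: "nat \<Rightarrow> nat" and s s' :: "nat \<Rightarrow> real"
  assumes "2 \<le> n" and "n < m"
    and "in_Bstar m (bsc_mix {1..m} q \<sigma>)"
    and "\<forall>k\<in>{1..m}. q k > 0"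
    and "0 \<le> \<sigma> 1" and "\<forall>k\<in>{1..<m}. \<sigma> k < \<sigma> (k+1)" and "\<sigma> m \<le> 1/2"
    and "is_Pstar_degr m q \<sigma> n i s"
    and "is_Pstar_degr m q \<sigma> n i' s'"
    and "card {j\<in>{2..n}. (i j, s j) \<noteq> (i' j, s' j)} \<le> 2"
    and "degraded (DQ m q \<sigma> n i s) (DQ m q \<sigma> n i' s')"
  shows "chan_equiv (DQ m q \<sigma> n i s) (DQ m q \<sigma> n i' s')"
proof -
  interpret QQ m q \<sigma> using assms(4,6) by unfold_locales
  have n1: "1 \<le> n" using assms(1) by simp
  note P = assms(8) and P' = assms(9)
  let ?W = "DQ m q \<sigma> n i s" and ?W' = "DQ m q \<sigma> n i' s'"
  let ?u = "KK m q n i s" and ?u' = "KK m q n i' s'"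
  have loc: "\<forall>k\<in>{1..<n}. (\<exists>j\<le>n. ?u k = ?u' j) \<or>
       (\<exists>j\<in>{1..n}. ?u' (j-1) < ?u k \<and> ?u k < ?u' j \<and> ?u (k-1) < ?u' (j-1) \<and> ?u' j < ?u (k+1))"
  proof
    fix k assume k: "k \<in> {1..<n}"
    define a0 where "a0 = ix m n i (k+1)"
    have a0m: "a0 \<in> {1..m}" using ix_mid[OF n1 P, of k] k unfolding a0_def by auto
    have ub: "cq m q (a0-1) \<le> ?u k" "?u k \<le> cq m q a0" using KK_atom[OF n1 P, of k] k unfolding a0_def by auto
    define f where "f y = (if y div 2 \<le> k then 1 else 0 :: real)" for y :: nat
    have f01: "\<forall>y\<in>fst ?W. 0 \<le> f y \<and> f y \<le> 1" unfolding f_def by auto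
    obtain f' where f'01: "\<forall>y\<in>fst ?W'. 0 \<le> f' y \<and> f' y \<le> 1"
      and fw: "(\<Sum>y\<in>fst ?W'. f' y * (snd ?W' 0 y + snd ?W' 1 y)) = (\<Sum>y\<in>fst ?W. f y * (snd ?W 0 y + snd ?W 1 y))"
      and fm: "(\<Sum>y\<in>fst ?W'. f' y * min (snd ?W' 0 y) (snd ?W' 1 y)) \<le> (\<Sum>y\<in>fst ?W. f y * min (snd ?W 0 y) (snd ?W 1 y))"
      using degr_transfer[OF assms(11) DQ_finite[OF n1 P] DQ_finite[OF n1 P'] f01] by blast
    define g where "g j = (f' (2*j) + f' (2*j+1)) / 2" for j
    have g01: "\<forall>j\<in>{1..n}. 0 \<le> g j \<and> g j \<le> 1"
    proof
      fix j assume j: "j \<in> {1..n}"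
      have "2*j \<in> fst ?W'" "2*j+1 \<in> fst ?W'" unfolding DQ_fst[OF n1 P'] using j by auto
      then have "0 \<le> f' (2*j) \<and> f' (2*j) \<le> 1" "0 \<le> f' (2*j+1) \<and> f' (2*j+1) \<le> 1"
        using f'01 by blast+
      then show "0 \<le> g j \<and> g j \<le> 1" unfolding g_def by auto
    qed
    have fj: "f (2*j) + f (2*j+1) = 2 * (if j \<le> k then 1 else 0)" for j unfolding f_def by auto
    have kn: "k \<le> n" using k by simp
    have pre: "\<forall>j\<in>{1..n}. (if j \<le> k then 1 else 0) = (if j \<le> k then (1::real) else 0)" by simp
    have "(\<Sum>y\<in>fst ?W. f y * (snd ?W 0 y + snd ?W 1 y)) = 2 * (\<Sum>j\<in>{1..n}. (if j \<le> k then 1 else 0) * DQ_p m q n i s j)"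
      unfolding DQ_sum_w[OF n1 P] fj by (simp add: sum_distrib_left algebra_simps)
    also have "\<dots> = 2 * ?u k" using sum_prefix[OF kn pre] sum_p[OF n1 P kn] by simp
    finally have w1: "(\<Sum>y\<in>fst ?W. f y * (snd ?W 0 y + snd ?W 1 y)) = 2 * ?u k" .
    have "(\<Sum>y\<in>fst ?W. f y * min (snd ?W 0 y) (snd ?W 1 y)) = 2 * (\<Sum>j\<in>{1..n}. (if j \<le> k then 1 else 0) * DQ_pe m q \<sigma> n i s j)"
      unfolding DQ_sum_min[OF n1 P] fj by (simp add: sum_distrib_left algebra_simps)
    also have "\<dots> = 2 * GG m q \<sigma> (?u k)" using sum_prefix[OF kn pre] sum_pe[OF n1 P kn] by simp
    finally have m1: "(\<Sum>y\<in>fst ?W. f y * min (snd ?W 0 y) (snd ?W 1 y)) = 2 * GG m q \<sigma> (?u k)" .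
    have w2: "(\<Sum>y\<in>fst ?W'. f' y * (snd ?W' 0 y + snd ?W' 1 y)) = 2 * (\<Sum>j\<in>{1..n}. g j * DQ_p m q n i' s' j)"
      unfolding DQ_sum_w[OF n1 P'] g_def sum_distrib_left by (intro sum.cong refl) (simp add: algebra_simps)
    have m2: "(\<Sum>y\<in>fst ?W'. f' y * min (snd ?W' 0 y) (snd ?W' 1 y)) = 2 * (\<Sum>j\<in>{1..n}. g j * DQ_pe m q \<sigma> n i' s' j)"
      unfolding DQ_sum_min[OF n1 P'] g_def sum_distrib_left by (intro sum.cong refl) (simp add: algebra_simps)
    have gs: "(\<Sum>j\<in>{1..n}. g j * DQ_p m q n i' s' j) = ?u k" using fw w1 w2 by simp
    have ge: "(\<Sum>j\<in>{1..n}. g j * DQ_pe m q \<sigma> n i' s' j) \<le> GG m q \<sigma> (?u k)" using fm m1 m2 by simp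
    have LK: "(\<exists>j\<in>{1..n}. ?u' (j-1) = cq m q (a0-1) \<and> ?u' j = cq m q a0) \<or> (\<exists>j\<le>n. ?u k = ?u' j)"
      using local_knot[OF n1 P' a0m ub g01 gs ge] .
    then show "(\<exists>j\<le>n. ?u k = ?u' j) \<or>
       (\<exists>j\<in>{1..n}. ?u' (j-1) < ?u k \<and> ?u k < ?u' j \<and> ?u (k-1) < ?u' (j-1) \<and> ?u' j < ?u (k+1))"
    proof
      assume "\<exists>j\<in>{1..n}. ?u' (j-1) = cq m q (a0-1) \<and> ?u' j = cq m q a0"
      then obtain j where j: "j \<in> {1..n}" "?u' (j-1) = cq m q (a0-1)" "?u' j = cq m q a0" by blast
      show ?thesis
      proof (cases "?u k = cq m q (a0-1) \<or> ?u k = cq m q a0")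
        case True
        have "j - 1 \<le> n" "j \<le> n" using j by auto
        then show ?thesis using True j by metis
      next
        case False
        then have lt: "cq m q (a0-1) < ?u k" "?u k < cq m q a0" using ub by auto
        have k1: "k \<in> {1..n}" "k+1 \<in> {1..n}" using k by auto
        have "?u (k-1) < cq m q (a0-1)"
        proof (rule ccontr)
          assume "\<not> ?u (k-1) < cq m q (a0-1)"
          then have "?u k = cq m q a0" using BW[OF n1 P k1(1) a0m] ub by simp
          then show False using lt by simp
        qed
        moreover have "?u (k+1) > cq m q a0"
        proof (rule ccontr)
          assume "\<not> ?u (k+1) > cq m q a0"
          then have "?u k = cq m q (a0-1)" using BW[OF n1 P k1(2) a0m] ub by simp
          then show False using lt by simp
        qed
        ultimately have "\<exists>j\<in>{1..n}. ?u' (j-1) < ?u k \<and> ?u k < ?u' j \<and> ?u (k-1) < ?u' (j-1) \<and> ?u' j < ?u (k+1)"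
          using lt j by (intro bexI[of _ j]) auto
        then show ?thesis by blast
      qed
    qed blast
  qed
  have eq: "\<forall>k\<le>n. ?u k = ?u' k"
  proof (rule knots_equal[OF _ _ _ _ loc])
    show "\<And>a b. a < b \<Longrightarrow> b \<le> n \<Longrightarrow> ?u a < ?u b" using KK_strict[OF n1 P] by blast
    show "\<And>a b. a < b \<Longrightarrow> b \<le> n \<Longrightarrow> ?u' a < ?u' b" using KK_strict[OF n1 P'] by blast
    show "?u 0 = ?u' 0" using KK0[OF n1 P] KK0[OF n1 P'] by simp
    show "?u n = ?u' n" using KKn[OF n1 P] KKn[OF n1 P'] by simp
  qed
  have peq: "DQ_p m q n i s j = DQ_p m q n i' s' j \<and> DQ_eps m q \<sigma> n i s j = DQ_eps m q \<sigma> n i' s' j"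
    if j: "j \<in> {1..n}" for j
  proof -
    have e1: "?u j = ?u' j" "?u (j-1) = ?u' (j-1)" using eq j by auto
    have "DQ_p m q n i s j = DQ_p m q n i' s' j" using p_eq[OF n1 P j] p_eq[OF n1 P' j] e1 by simp
    moreover have "DQ_pe m q \<sigma> n i s j = DQ_pe m q \<sigma> n i' s' j" using pe_eq[OF n1 P j] pe_eq[OF n1 P' j] e1 by simp
    ultimately show ?thesis unfolding DQ_eps_def by simp
  qed
  show ?thesis
  proof (rule chan_equiv_cong)
    show "fst ?W = fst ?W'" using DQ_fst[OF n1 P] DQ_fst[OF n1 P'] by simp
    show "\<forall>y\<in>fst ?W. snd ?W 0 y = snd ?W' 0 y \<and> snd ?W 1 y = snd ?W' 1 y"
    proof
      fix y assume "y \<in> fst ?W"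
      then have "y div 2 \<in> {1..n}" using DQ_fst[OF n1 P] by simp
      then show "snd ?W 0 y = snd ?W' 0 y \<and> snd ?W 1 y = snd ?W' 1 y"
        using peq[of "y div 2"] unfolding DQ_def bsc_mix_def snd_conv by simp
    qed
  qed
qed


end
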